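(* Let $d\ge 2$, let $\bm{k}_1,\ldots,\bm{k}_d\in\mathbb{R}^d$ be a basis of $\mathbb{R}^d$ with $\mathsf{K}=[\bm{k}_1,\ldots,\bm{k}_d]$, let $\mathsf{A}=[\bm{a}_1,\ldots,\bm{a}_d]=2\pi\mathsf{K}^{-T}$, and let $\mathfrak{a},\mathfrak{b}\in\mathbb{R}$. For $\bm{u}=[\alpha_1,\ldots,\alpha_d,\beta_1,\ldots,\beta_d]^T\in\mathbb{C}^{2d}$ and $\bm{x}\in\mathbb{R}^d$ let $p(\bm{x};\bm{u})=\sum_{j=1}^d\alpha_j e^{i\bm{k}_j\cdot\bm{x}}+\beta_j e^{-i\bm{k}_j\cdot\bm{x}}$, $\psi(\bm{x};\bm{u})=\mathfrak{a}|p(\bm{x};\bm{u})|^2-\mathfrak{b}|\nabla_{\bm{x}}p(\bm{x};\bm{u})|^2$, and let $\mathsf{Q}(\bm{0})$ be the Hermitian matrix with $\psi(\bm{0};\bm{u})=\bm{u}^*\mathsf{Q}(\bm{0})\bm{u}$. Let $\bm{u}=[\bm{v};\pm\bm{v}]$ (with $\bm{v}\in\mathbb{R}^d$ and a fixed choice of sign) be a real unit-norm eigenvector of $\mathsf{Q}(\bm{0})$ with eigenvalue $\lambda$, and let $Z=\{j: v_j=0\}$. If $Z\neq\emptyset$, then $$\{\bm{k}_j: j\notin Z\}^\perp=\operatorname{span}\{\bm{a}_j: j\in Z\}\subset L_{\lambda,\bm{u}},$$ where $L_{\lambda,\bm{u}}=\{\bm{x}\in\mathbb{R}^d:\psi(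\bm{x};\bm{u})=\lambda\}$.
   Context: $[\bm{v};\pm\bm{v}]$ denotes the vector of $\mathbb{R}^{2d}$ obtained by stacking $\bm{v}$ on top of $\pm\bm{v}$. $S^\perp$ denotes the orthogonal complement in $\mathbb{R}^d$ of the set $S$. *)

theory Defs
  imports "HOL-Analysis.Analysis"
begin

text \<open>Vectors u in C^{2d} are indexed by 'n + 'n: u $ Inl j = alpha_j, u $ Inr j = beta_j.
  The wave vectors k_j are the columns of K.\<close>

definition pfun :: "real^'n^'n \<Rightarrow> real^'n \<Rightarrow> complex^('n + 'n) \<Rightarrow> complex" where
  "pfun K x u = (\<Sum>j\<in>UNIV. u $ Inl j * exp (\<i> * of_real (column j K \<bullet> x))
                          + u $ Inr j * exp (- (\<i> * of_real (column j K \<bullet> x))))"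

definition grad_norm_sq :: "(real^'n \<Rightarrow> complex) \<Rightarrow> real^'n \<Rightarrow> real" where
  "grad_norm_sq f x = (\<Sum>l\<in>UNIV. (cmod (frechet_derivative f (at x) (axis l 1)))\<^sup>2)"

definition psi :: "real^'n^'n \<Rightarrow> real \<Rightarrow> real \<Rightarrow> real^'n \<Rightarrow> complex^('n + 'n) \<Rightarrow> real" where
  "psi K a b x u = a * (cmod (pfun K x u))\<^sup>2 - b * grad_norm_sq (\<lambda>y. pfun K y u) x"

definition cmat_hermitian :: "complex^'m^'m \<Rightarrow> bool" where
  "cmat_hermitian Q \<longleftrightarrow> (\<forall>i j. Q $ i $ j = cnj (Q $ j $ i))"

definition quad_form :: "complex^'m^'m \<Rightarrow> complex^'m \<Rightarrow> complex" where
  "quad_form Q u = (\<Sum>i\<in>UNIV. cnj (u $ i) * (Q *v u) $ i)"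

definition Amat :: "real^'n^'n \<Rightarrow> real^'n^'n" where
  "Amat K = (2 * pi) *\<^sub>R transpose (matrix_inv K)"

end

theory Submission imports Defs begin
lemma cexp_chain[derivative_intros]: "(g has_derivative g') (at x) \<Longrightarrow> ((\<lambda>x. exp (g x :: complex)) has_derivative (\<lambda>h. exp (g x) * g' h)) (at x)"
  using has_derivative_compose[of g g' x UNIV exp "(*) (exp (g x))"] DERIV_exp[of "g x", unfolded has_field_derivative_def]
  by simp

definition pder :: "real^'n^'n \<Rightarrow> real^'n \<Rightarrow> complex^('n + 'n) \<Rightarrow> real^'n \<Rightarrow> complex" where
 "pder K x u = (\<lambda>h. \<Sum>j\<in>UNIV. u$Inl j * exp(\<i> * of_real(column j K \<bullet> x)) * (\<i> * of_real(column j K \<bullet> h)) + u$Inr j * exp(-(\<i> * of_real(column j K \<bullet> x))) * (-(\<i> * of_real(column j K \<bullet> h))))"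

lemma pfun_deriv: "((\<lambda>y. pfun K y u) has_derivative pder K x u) (at x)"
  unfolding pfun_def pder_def
  apply (rule derivative_eq_intros refl | simp)+
  apply (simp add: mult.assoc)
  done

lemma psi_eq:
  assumes "\<And>j. u $ Inl j * exp(\<i> * of_real(column j K \<bullet> x)) = u $ Inl j"
    and "\<And>j. u $ Inr j * exp(-(\<i> * of_real(column j K \<bullet> x))) = u $ Inr j"
  shows "psi K a b x u = psi K a b 0 u"
proof -
  have "pfun K x u = pfun K 0 u" unfolding pfun_def assms by simp
  moreover have "pder K x u = pder K 0 u" unfolding pder_def assms by simp
  ultimately show ?thesis
    unfolding psi_def grad_norm_sq_def
    using frechet_derivative_at[OF pfun_deriv[of K u x]] frechet_derivative_at[OF pfun_deriv[of K u 0]]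
    by metis
qed

lemma Amat_dot:
  assumes "invertible K"
  shows "column i K \<bullet> column j (Amat K) = (if i = j then 2*pi else 0)"
proof -
  have "matrix_inv K ** K = mat 1"
    using assms unfolding invertible_def matrix_inv_def by (metis (mono_tags, lifting) someI_ex)
  hence "(matrix_inv K ** K) $ j $ i = mat 1 $ j $ i" by simp
  hence "(\<Sum>l\<in>UNIV. matrix_inv K $ j $ l * K $ l $ i) = (if i = j then 1 else 0)"
    by (auto simp: matrix_matrix_mult_def mat_def)
  moreover have "column i K \<bullet> column j (Amat K) = 2*pi * (\<Sum>l\<in>UNIV. matrix_inv K $ j $ l * K $ l $ i)"
    unfolding Amat_def column_def inner_vec_def transpose_def
    by (simp add: sum_distrib_left mult.commute mult.left_commute)
  ultimately show ?thesis by simp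
qed

lemma Amat_recon:
  assumes "invertible K"
  shows "x = (\<Sum>j\<in>UNIV. ((column j K \<bullet> x) / (2*pi)) *\<^sub>R column j (Amat K))"
proof -
  have "K ** matrix_inv K = mat 1"
    using assms unfolding invertible_def matrix_inv_def by (metis (mono_tags, lifting) someI_ex)
  hence "(K ** matrix_inv K) $ l $ m = mat 1 $ l $ m" for l m by simp
  hence m: "\<And>l m. (\<Sum>j\<in>UNIV. K $ l $ j * matrix_inv K $ j $ m) = (if l = m then 1 else 0)"
    by (auto simp: matrix_matrix_mult_def mat_def)
  show ?thesis
  proof (subst vec_eq_iff, intro allI)
    fix m
    have "(\<Sum>j\<in>UNIV. ((column j K \<bullet> x) / (2*pi)) *\<^sub>R column j (Amat K)) $ m
        = (\<Sum>j\<in>UNIV. (\<Sum>l\<in>UNIV. K $ l $ j * x $ l) * matrix_inv K $ j $ m)"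
      unfolding Amat_def column_def inner_vec_def transpose_def
      by (simp add: mult.commute)
    also have "\<dots> = (\<Sum>j\<in>UNIV. \<Sum>l\<in>UNIV. x $ l * (K $ l $ j * matrix_inv K $ j $ m))"
      by (simp add: sum_distrib_left mult_ac)
    also have "\<dots> = (\<Sum>l\<in>UNIV. \<Sum>j\<in>UNIV. x $ l * (K $ l $ j * matrix_inv K $ j $ m))"
      by (rule sum.swap)
    also have "\<dots> = (\<Sum>l\<in>UNIV. x $ l * (\<Sum>j\<in>UNIV. K $ l $ j * matrix_inv K $ j $ m))"
      by (simp add: sum_distrib_left)
    also have "\<dots> = (\<Sum>l\<in>UNIV. if l = m then x $ l else 0)"
      by (intro sum.cong refl) (simp add: m)
    also have "\<dots> = x $ m" by simp
    finally show "x $ m = (\<Sum>j\<in>UNIV. ((column j K \<bullet> x) / (2*pi)) *\<^sub>R column j (Amat K)) $ m" by simp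
  qed
qed

theorem lemma2p4:
  fixes K :: "real^'n^'n" and a b :: real
    and Q :: "complex^('n + 'n)^('n + 'n)"
    and v :: "real^'n" and s :: real and lam :: complex
  assumes d2: "CARD('n) \<ge> 2"
    and basis: "invertible K"
    and herm: "cmat_hermitian Q"
    and Qdef: "\<forall>u. complex_of_real (psi K a b 0 u) = quad_form Q u"
    and sgn: "s = 1 \<or> s = -1"
    and udef: "u = (\<chi> i. case i of Inl j \<Rightarrow> complex_of_real (v $ j)
                                  | Inr j \<Rightarrow> complex_of_real (s * v $ j))"
    and unit: "norm u = 1"
    and eig: "Q *v u = lam *s u"
    and Zdef: "Z = {j. v $ j = 0}"
    and Zne: "Z \<noteq> {}"
  shows "orthogonal_comp {column j K | j. j \<notin> Z} = span {column j (Amat K) | j. j \<in> Z}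
       \<and> span {column j (Amat K) | j. j \<in> Z}
            \<subseteq> {x. complex_of_real (psi K a b x u) = lam}"
proof -
  have eq: "orthogonal_comp {column j K | j. j \<notin> Z} = span {column j (Amat K) | j. j \<in> Z}"
  proof
    show "orthogonal_comp {column j K | j. j \<notin> Z} \<subseteq> span {column j (Amat K) | j. j \<in> Z}"
    proof
      fix x assume x: "x \<in> orthogonal_comp {column j K | j. j \<notin> Z}"
      hence z: "\<And>j. j \<notin> Z \<Longrightarrow> column j K \<bullet> x = 0"
        unfolding orthogonal_comp_def orthogonal_def by blast
      have "x = (\<Sum>j\<in>UNIV. ((column j K \<bullet> x) / (2*pi)) *\<^sub>R column j (Amat K))"
        by (rule Amat_recon[OF basis])
      also have "\<dots> = (\<Sum>j\<in>Z. ((column j K \<bullet> x) / (2*pi)) *\<^sub>R column j (Amat K))"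
        by (rule sum.mono_neutral_right) (auto simp: z)
      also have "\<dots> \<in> span {column j (Amat K) | j. j \<in> Z}"
        by (rule span_sum, rule span_mul, rule span_base) auto
      finally show "x \<in> span {column j (Amat K) | j. j \<in> Z}" .
    qed
    show "span {column j (Amat K) | j. j \<in> Z} \<subseteq> orthogonal_comp {column j K | j. j \<notin> Z}"
      apply (rule span_minimal)
       apply (auto simp: orthogonal_comp_def orthogonal_def Amat_dot[OF basis])[1]
      apply (rule subspace_orthogonal_comp)
      done
  qed
  have q: "complex_of_real (psi K a b 0 u) = lam"
  proof -
    have "complex_of_real (psi K a b 0 u) = quad_form Q u" using Qdef by blast
    also have "\<dots> = lam * (\<Sum>i\<in>UNIV. cnj (u $ i) * u $ i)"
      unfolding quad_form_def eig by (simp add: sum_distrib_left mult.commute mult.left_commute)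
    also have "(\<Sum>i\<in>UNIV. cnj (u $ i) * u $ i) = complex_of_real (\<Sum>i\<in>UNIV. (norm (u $ i))\<^sup>2)"
      unfolding of_real_sum by (simp only: complex_norm_square mult.commute)
    also have "(\<Sum>i\<in>UNIV. (norm (u $ i))\<^sup>2) = (norm u)\<^sup>2"
      unfolding norm_vec_def L2_set_def by (simp add: sum_nonneg)
    finally show ?thesis using unit by simp
  qed
  have "complex_of_real (psi K a b x u) = lam" if x: "x \<in> span {column j (Amat K) | j. j \<in> Z}" for x
  proof -
    have z: "column j K \<bullet> x = 0" if "j \<notin> Z" for j
      using x that unfolding eq[symmetric] orthogonal_comp_def orthogonal_def by blast
    have "psi K a b x u = psi K a b 0 u"
    proof (rule psi_eq)
      fix j
      show "u $ Inl j * exp(\<i> * of_real(column j K \<bullet> x)) = u $ Inl j"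
        using z[of j] by (cases "j \<in> Z") (auto simp: udef Zdef)
      show "u $ Inr j * exp(-(\<i> * of_real(column j K \<bullet> x))) = u $ Inr j"
        using z[of j] by (cases "j \<in> Z") (auto simp: udef Zdef)
    qed
    thus ?thesis using q by simp
  qed
  with eq show ?thesis by blast
qed

end
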